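(* Let $X$ be a uniformly convex and uniformly smooth Banach space, $D_0$ a dislocation group on $X$ and $D\subset D_0$. Let $(u_k)\subset X$ be bounded and suppose there are sequences $(g_k^{(1)}),(g_k^{(2)})\subset D$ and elements $w^{(1)},w^{(2)}\in X$ with $(g_k^{(1)})^{-1}u_k\rightharpoondown w^{(1)}$ and $(g_k^{(2)})^{-1}(u_k-g_k^{(1)}w^{(1)})\rightharpoondown w^{(2)}\ne0$. Then $(g_k^{(1)})^{-1}g_k^{(2)}\rightharpoonup0$.
   Context: Δ-convergence: $x_k\rightharpoondown x$ if for every $y\in X$, $\limsup_k(\|x_k-x\|-\|x_k-y\|)\le0$. Operator convergence $g_k\rightharpoonup g$: $g_kx\rightharpoonup gx$ weakly for all $x$; strong convergence: $g_kx\to gx$ in norm for all $x$. A group $D_0$ of bijective linear isometries of $X$ is a dislocation group if: $(\ast)$ whenever $(g_k)\subset D_0$ and $g_k\not\rightharpoonup0$, some subsequence has both $(g_{k_j})$ and $(g_{k_j}^{-1})$ strongly convergent; and $(\ast\ast)$ whenever $u_k\rightharpoondown0$, $w\in X$, $(g_k)\subset D_0$, $g_k\rightharpoonup0$, then $u_k+g_kw\rightharpoondown0$. *)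

theory Defs
  imports "HOL-Analysis.Analysis" "HOL-Library.Liminf_Limsup"
begin

definition uniformly_convex :: "'a::real_normed_vector itself \<Rightarrow> bool" where
  "uniformly_convex _ \<longleftrightarrow>
     (\<forall>e>0. \<exists>d>0. \<forall>x y::'a. norm x \<le> 1 \<longrightarrow> norm y \<le> 1 \<longrightarrow> norm (x - y) \<ge> e
        \<longrightarrow> norm ((1/2) *\<^sub>R (x + y)) \<le> 1 - d)"

definition modulus_of_smoothness :: "'a::real_normed_vector itself \<Rightarrow> real \<Rightarrow> real" where
  "modulus_of_smoothness _ t =
     (SUP p \<in> {(x::'a, y::'a). norm x = 1 \<and> norm y = 1}.
        (norm (fst p + t *\<^sub>R snd p) + norm (fst p - t *\<^sub>R snd p)) / 2 - 1)"

definition uniformly_smooth :: "'a::real_normed_vector itself \<Rightarrow> bool" where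
  "uniformly_smooth T \<longleftrightarrow>
     ((\<lambda>t. modulus_of_smoothness T t / t) \<longlongrightarrow> 0) (at_right 0)"

definition weak_conv :: "(nat \<Rightarrow> 'a::real_normed_vector) \<Rightarrow> 'a \<Rightarrow> bool" where
  "weak_conv x l \<longleftrightarrow> (\<forall>f::'a \<Rightarrow>\<^sub>L real. (\<lambda>k. f (x k)) \<longlonglongrightarrow> f l)"

definition delta_conv :: "(nat \<Rightarrow> 'a::real_normed_vector) \<Rightarrow> 'a \<Rightarrow> bool" where
  "delta_conv x l \<longleftrightarrow>
     (\<forall>y. limsup (\<lambda>k. ereal (norm (x k - l) - norm (x k - y))) \<le> 0)"

definition op_weak_conv :: "(nat \<Rightarrow> 'a \<Rightarrow> 'a::real_normed_vector) \<Rightarrow> ('a \<Rightarrow> 'a) \<Rightarrow> bool" where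
  "op_weak_conv g h \<longleftrightarrow> (\<forall>x. weak_conv (\<lambda>k. g k x) (h x))"

definition op_strong_conv :: "(nat \<Rightarrow> 'a \<Rightarrow> 'a::real_normed_vector) \<Rightarrow> ('a \<Rightarrow> 'a) \<Rightarrow> bool" where
  "op_strong_conv g h \<longleftrightarrow> (\<forall>x. (\<lambda>k. g k x) \<longlonglongrightarrow> h x)"

definition dislocation_group :: "('a::real_normed_vector \<Rightarrow> 'a) set \<Rightarrow> bool" where
  "dislocation_group D0 \<longleftrightarrow>
     (\<forall>g\<in>D0. linear g \<and> bij g \<and> (\<forall>x. norm (g x) = norm x)) \<and>
     id \<in> D0 \<and> (\<forall>g\<in>D0. \<forall>h\<in>D0. g \<circ> h \<in> D0) \<and> (\<forall>g\<in>D0. inv g \<in> D0) \<and>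
     (\<forall>g. (\<forall>k. g k \<in> D0) \<and> \<not> op_weak_conv g (\<lambda>_. 0) \<longrightarrow>
        (\<exists>r. strict_mono r \<and> (\<exists>h. op_strong_conv (g \<circ> r) h)
                             \<and> (\<exists>h. op_strong_conv (\<lambda>j. inv (g (r j))) h))) \<and>
     (\<forall>u w g. delta_conv u 0 \<and> (\<forall>k. g k \<in> D0) \<and> op_weak_conv g (\<lambda>_. 0) \<longrightarrow>
        delta_conv (\<lambda>k. u k + g k w) 0)"

end

theory Submission
  imports Defs
begin

lemma limsup_ev:
  assumes "limsup (\<lambda>k. ereal (a k)) \<le> 0" "c > 0"
  shows "eventually (\<lambda>k. a k < c) sequentially"
proof -
  have "limsup (\<lambda>k. ereal (a k)) < ereal c" using assms by (simp add: le_less_trans)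
  from Limsup_lessD[OF this] show ?thesis by simp
qed

lemma uc_gap:
  fixes w :: "'a::real_normed_vector"
  assumes uc: "uniformly_convex TYPE('a)" and w: "w \<noteq> 0"
  shows "\<exists>c>0. \<forall>x::'a. norm x \<le> B \<longrightarrow>
     c \<le> max (norm x - norm (x - (1/2) *\<^sub>R w)) (norm (x - w) - norm (x - (1/2) *\<^sub>R w))"
proof -
  define R where "R = max B 0 + norm w"
  have nw: "norm w > 0" using w by simp
  have R: "R > 0" unfolding R_def using nw max.cobounded2[of 0 B] by linarith
  define e where "e = norm w / R"
  have e: "e > 0" unfolding e_def using nw R by simp
  from uc[unfolded uniformly_convex_def, rule_format, OF e] obtain d where d: "d > 0"
    and dd: "\<And>x y::'a. norm x \<le> 1 \<Longrightarrow> norm y \<le> 1 \<Longrightarrow> norm (x - y) \<ge> e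
        \<Longrightarrow> norm ((1/2) *\<^sub>R (x + y)) \<le> 1 - d" by blast
  define c where "c = d * norm w / 2"
  have c: "c > 0" unfolding c_def using d nw by simp
  show ?thesis
  proof (intro exI[of _ c] conjI allI impI c)
    fix x :: 'a assume xB: "norm x \<le> B"
    define M where "M = max (norm x) (norm (x - w))"
    have "norm w \<le> norm x + norm (x - w)" using norm_triangle_ineq4[of x "x - w"] by simp
    hence Mw: "M \<ge> norm w / 2" unfolding M_def by linarith
    have MR: "M \<le> R" unfolding M_def R_def using xB norm_triangle_ineq4[of x w] norm_ge_zero[of w] norm_ge_zero[of x] by (smt (verit))
    have M0: "M > 0" using Mw nw by linarith
    define a where "a = (1/M) *\<^sub>R x"
    define b where "b = (1/M) *\<^sub>R (x - w)"
    have na: "norm a \<le> 1" unfolding a_def using M0 by (simp add: M_def divide_le_eq_1)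
    have nb: "norm b \<le> 1" unfolding b_def using M0 by (simp add: M_def divide_le_eq_1)
    have "a - b = (1/M) *\<^sub>R w" unfolding a_def b_def by (simp add: algebra_simps)
    hence "norm (a - b) = norm w / M" using M0 by simp
    moreover have "norm w / R \<le> norm w / M" using MR M0 nw by (simp add: frac_le)
    ultimately have "norm (a - b) \<ge> e" unfolding e_def by simp
    from dd[OF na nb this] have h: "norm ((1/2) *\<^sub>R (a + b)) \<le> 1 - d" .
    have "(1/2) *\<^sub>R (a + b) = (1/M) *\<^sub>R (x - (1/2) *\<^sub>R w)"
      unfolding a_def b_def by (simp add: algebra_simps flip: scaleR_add_left)
    hence eq: "norm ((1/2) *\<^sub>R (a + b)) = norm (x - (1/2) *\<^sub>R w) / M" using M0 by simp
    have "norm (x - (1/2) *\<^sub>R w) / M \<le> 1 - d" using h unfolding eq .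
    hence "norm (x - (1/2) *\<^sub>R w) \<le> (1 - d) * M" using M0 by (simp add: pos_divide_le_eq)
    hence "norm (x - (1/2) *\<^sub>R w) \<le> M * (1 - d)" by (simp add: mult.commute)
    hence "norm (x - (1/2) *\<^sub>R w) \<le> M - M * d" by (simp add: algebra_simps)
    moreover have "M * d \<ge> c" unfolding c_def using Mw d
      by (metis mult.commute mult_right_mono less_imp_le times_divide_eq_right)
    ultimately show "c \<le> max (norm x - norm (x - (1/2) *\<^sub>R w)) (norm (x - w) - norm (x - (1/2) *\<^sub>R w))"
      unfolding M_def by linarith
  qed
qed


theorem lemma5p8:
  fixes D0 D :: "('a::banach \<Rightarrow> 'a) set"
    and u :: "nat \<Rightarrow> 'a" and g1 g2 :: "nat \<Rightarrow> 'a \<Rightarrow> 'a" and w1 w2 :: 'a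
  assumes "uniformly_convex TYPE('a)" and "uniformly_smooth TYPE('a)"
    and "dislocation_group D0" and "D \<subseteq> D0"
    and "bounded (range u)"
    and "\<And>k. g1 k \<in> D" and "\<And>k. g2 k \<in> D"
    and "delta_conv (\<lambda>k. inv (g1 k) (u k)) w1"
    and "delta_conv (\<lambda>k. inv (g2 k) (u k - g1 k w1)) w2"
    and "w2 \<noteq> 0"
  shows "op_weak_conv (\<lambda>k. inv (g1 k) \<circ> g2 k) (\<lambda>_. 0)"
proof (rule ccontr)
  assume nw: "\<not> ?thesis"
  note DG = assms(3)[unfolded dislocation_group_def]
  have iso: "\<And>g. g \<in> D0 \<Longrightarrow> linear g \<and> bij g \<and> (\<forall>x. norm (g x) = norm x)"
    using DG by blast
  have invD: "\<And>g. g \<in> D0 \<Longrightarrow> inv g \<in> D0" using DG by blast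
  have compD: "\<And>g h. g \<in> D0 \<Longrightarrow> h \<in> D0 \<Longrightarrow> g \<circ> h \<in> D0" using DG by blast
  have G1: "\<And>k. g1 k \<in> D0" and G2: "\<And>k. g2 k \<in> D0" using assms(4,6,7) by auto
  define h where "h = (\<lambda>k. inv (g1 k) \<circ> g2 k)"
  have hD: "\<And>k. h k \<in> D0" unfolding h_def using G1 G2 invD compD by blast
  from DG hD nw[folded h_def] obtain r H where r: "strict_mono r"
    and H: "op_strong_conv (h \<circ> r) H" by blast
  define x where "x = (\<lambda>k. inv (g2 k) (u k - g1 k w1))"
  define z where "z = (\<lambda>k. inv (g1 k) (u k))"
  have key: "norm (x k) - norm (x k - y) = norm (z k - w1) - norm (z k - w1 - h k y)" for k y
  proof -
    have l1: "linear (g1 k)" and b1: "bij (g1 k)" and n1: "\<And>v. norm (g1 k v) = norm v"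
      using iso[OF G1[of k]] by auto
    have l2: "linear (inv (g2 k))" and n2: "\<And>v. norm (inv (g2 k) v) = norm v"
      using iso[OF invD[OF G2[of k]]] by auto
    have b2: "bij (g2 k)" using iso[OF G2[of k]] by auto
    have u: "u k = g1 k (z k)" unfolding z_def using b1 by (simp add: bij_is_surj surj_f_inv_f)
    have e1: "u k - g1 k w1 = g1 k (z k - w1)" using u l1 by (simp add: linear_diff)
    have y: "y = inv (g2 k) (g2 k y)" using b2 by (simp add: bij_is_inj)
    have g2y: "g2 k y = g1 k (h k y)" unfolding h_def using b1 by (simp add: bij_is_surj surj_f_inv_f)
    have "x k - y = inv (g2 k) (u k - g1 k w1 - g2 k y)"
      unfolding x_def linear_diff[OF l2] using y by simp
    also have "\<dots> = inv (g2 k) (g1 k (z k - w1 - h k y))"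
      unfolding e1 g2y by (simp add: linear_diff[OF l1])
    finally have "norm (x k - y) = norm (z k - w1 - h k y)" by (simp add: n1 n2)
    moreover have "norm (x k) = norm (z k - w1)" unfolding x_def e1 by (simp add: n1 n2)
    ultimately show ?thesis by simp
  qed
  obtain Bu where Bu: "\<And>k. norm (u k) \<le> Bu"
    using assms(5) unfolding bounded_iff by blast
  have xB: "norm (x k) \<le> Bu + norm w1" for k
  proof -
    have "norm (x k) = norm (u k - g1 k w1)" unfolding x_def
      using iso[OF invD[OF G2[of k]]] by simp
    also have "\<dots> \<le> norm (u k) + norm (g1 k w1)" by (rule norm_triangle_ineq4)
    also have "\<dots> = norm (u k) + norm w1" using iso[OF G1[of k]] by simp
    finally show ?thesis using Bu[of k] by simp
  qed
  define y0 where "y0 = (1/2) *\<^sub>R w2"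
  obtain c where c: "c > 0" and gap: "\<And>v. norm v \<le> Bu + norm w1 \<Longrightarrow>
     c \<le> max (norm v - norm (v - y0)) (norm (v - w2) - norm (v - y0))"
    using uc_gap[OF assms(1) assms(10), of "Bu + norm w1"] unfolding y0_def by blast
  have ev1: "eventually (\<lambda>k. norm (x k - w2) - norm (x k - y0) < c) sequentially"
    using assms(9) unfolding delta_conv_def x_def
    by (intro limsup_ev[OF _ c]) blast
  have ev2: "eventually (\<lambda>k. norm (z k - w1) - norm (z k - (w1 + H y0)) < c/2) sequentially"
    using assms(8) c unfolding delta_conv_def z_def
    by (intro limsup_ev) auto
  have ev3: "eventually (\<lambda>j. norm (h (r j) y0 - H y0) < c/2) sequentially"
  proof -
    have "(\<lambda>j. h (r j) y0) \<longlonglongrightarrow> H y0" using H unfolding op_strong_conv_def by auto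
    from tendstoD[OF this, of "c/2"] c show ?thesis by (simp add: dist_norm)
  qed
  have "eventually (\<lambda>j. False) sequentially"
    using eventually_subseq[OF r ev1] eventually_subseq[OF r ev2] ev3
  proof eventually_elim
    case (elim j)
    let ?k = "r j"
    have "norm (x ?k) - norm (x ?k - y0) = norm (z ?k - w1) - norm (z ?k - w1 - h ?k y0)"
      by (rule key)
    also have "\<dots> \<le> norm (z ?k - w1) - norm (z ?k - (w1 + H y0)) + norm (h ?k y0 - H y0)"
      using norm_triangle_ineq4[of "z ?k - w1 - h ?k y0" "H y0 - h ?k y0"]
      by (simp add: algebra_simps norm_minus_commute)
    finally have "norm (x ?k) - norm (x ?k - y0) < c" using elim by simp
    with elim(1) gap[OF xB[of ?k]] show False by linarith
  qed
  thus False by simp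
qed

end
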